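(* Let $\mathfrak{X}=(X,\{R_0,R_1,R_2,R_3,R_4\})$ be a skew-symmetric $4$-class association scheme with $R_1^\top=R_2$ and $R_3^\top=R_4$, and suppose that the character table of $\mathfrak X$ is of type $3$ (in the sense described in the context). Then the digraph $(X,R_i)$ has $5$ distinct eigenvalues for each $1\leq i\leq 4$.
   Context: An association scheme on a finite set $X$ is a partition of $X\times X$ into relations $R_0$ (diagonal), $R_1,\dots,R_d$ closed under transposition, with constant intersection numbers; skew-symmetric means $R_0$ is the only symmetric relation. Schemes with $\le4$ classes are commutative; the primitive idempotents $E_j$ of the Bose–Mesner algebra satisfy $A_iE_j=p_i(j)E_j$, and the character table has $(j,i)$-entry $p_i(j)$. The symmetrization $\tilde{\mathfrak X}=(X,\{R_0,R_1\cup R_2,R_3\cup R_4\})$ has character table with rows $(1,k_1,k_2)$, $(1,r_1,t_1)$, $(1,r_2,t_2)$ (rows $\tilde E_0,\tilde E_1,\tilde E_2$ with multiplicities $1,m_1,m_2$). It is known that the primitive idempotents of $\mathfrak X$ can be ordered so that its character table (columns $A_0,\dots,A_4$) has rows $(1,k_1/2,k_1/2,k_2/2,k_2/2)$, $(1,\rho,\bar\rho,\tau,\bar\tau)$, $(1,\sigma,\bar\sigma,\omega,\bar\omega)$, $(1,\bar\sigma,\sigma,\bar\omega,\omega)$, $(1,\bar\rho,\rho,\bar\tau,\tau)$, where one of three cases holds; type 3 is the case $\rho=(r_1+\sqrt{-y})/2$, $\tau=(t_1+\sqrt{-z})/2$, $\sigma=(r_2+\sqrt{-b})/2$, $\omega=(t_2-\sqrt{-c})/2$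 with $b,c,y,z$ all positive reals. Eigenvalues of a digraph $(X,R)$ are those of its $01$ adjacency matrix. *)

theory Defs
  imports "HOL-Analysis.Analysis"
begin

text \<open>The finite set X is modelled by a finite type 'x; relations R 0, ..., R d are sets
of pairs. Matrices are complex matrices indexed by X.\<close>

definition assoc_scheme :: "nat \<Rightarrow> (nat \<Rightarrow> ('x::finite \<times> 'x) set) \<Rightarrow> bool" where
  "assoc_scheme d R \<longleftrightarrow>
     R 0 = Id \<and>
     (\<forall>i\<le>d. R i \<noteq> {}) \<and>
     (\<forall>i\<le>d. \<forall>j\<le>d. i \<noteq> j \<longrightarrow> R i \<inter> R j = {}) \<and>
     (\<Union>i\<le>d. R i) = UNIV \<and>
     (\<forall>i\<le>d. \<exists>j\<le>d. (R i)\<inverse> = R j) \<and>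
     (\<forall>i\<le>d. \<forall>j\<le>d. \<forall>k\<le>d. \<exists>p::nat. \<forall>x y. (x, y) \<in> R k \<longrightarrow>
         card {z. (x, z) \<in> R i \<and> (z, y) \<in> R j} = p)"

definition skew_symmetric_scheme :: "nat \<Rightarrow> (nat \<Rightarrow> ('x::finite \<times> 'x) set) \<Rightarrow> bool" where
  "skew_symmetric_scheme d R \<longleftrightarrow> assoc_scheme d R \<and> (\<forall>i. 1 \<le> i \<and> i \<le> d \<longrightarrow> (R i)\<inverse> \<noteq> R i)"

definition adj :: "('x::finite \<times> 'x) set \<Rightarrow> complex^'x^'x" where
  "adj R = (\<chi> x y. if (x, y) \<in> R then 1 else 0)"

definition eigenvalue :: "complex^'x^'x \<Rightarrow> complex \<Rightarrow> bool" where
  "eigenvalue A c \<longleftrightarrow> (\<exists>v. v \<noteq> 0 \<and> A *v v = c *s v)"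

definition bose_mesner :: "nat \<Rightarrow> (nat \<Rightarrow> ('x::finite \<times> 'x) set) \<Rightarrow> (complex^'x^'x) set" where
  "bose_mesner d R = {M. \<exists>c::nat \<Rightarrow> complex. M = (\<Sum>i\<le>d. mat (c i) ** adj (R i))}"

definition primitive_idempotent :: "nat \<Rightarrow> (nat \<Rightarrow> ('x::finite \<times> 'x) set) \<Rightarrow> complex^'x^'x \<Rightarrow> bool" where
  "primitive_idempotent d R E \<longleftrightarrow>
     E \<in> bose_mesner d R \<and> E ** E = E \<and> E \<noteq> 0 \<and>
     (\<forall>F\<in>bose_mesner d R. F ** F = F \<and> F ** E = F \<longrightarrow> F = 0 \<or> F = E)"

text \<open>Character table of a 4-class skew-symmetric scheme (R1^T = R2, R3^T = R4) is of type 3: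
  the primitive idempotents can be ordered E 0, ..., E 4 so that A_i E_j = p_i(j) E_j with the
  table rows (1,k1/2,k1/2,k2/2,k2/2), (1,rho,rho',tau,tau'), (1,sigma,sigma',omega,omega'),
  (1,sigma',sigma,omega',omega), (1,rho',rho,tau',tau) (primes = complex conjugates), where
  rho = (r1+sqrt(-y))/2, tau = (t1+sqrt(-z))/2, sigma = (r2+sqrt(-b))/2, omega = (t2-sqrt(-c))/2,
  b,c,y,z > 0, (1,k1,k2), (1,r1,t1), (1,r2,t2) being the rows of the character table of the
  symmetrization (A_1+A_2, A_3+A_4 acting on E_0, E_1+E_4, E_2+E_3).\<close>
definition char_table_type3 :: "(nat \<Rightarrow> ('x::finite \<times> 'x) set) \<Rightarrow> bool" where
  "char_table_type3 R \<longleftrightarrow>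
    (\<exists>(E::nat \<Rightarrow> complex^'x^'x) (p::nat \<Rightarrow> nat \<Rightarrow> complex)
       k1 k2 r1 t1 r2 t2 y z b c :: real.
      bij_betw E {0..4} {F. primitive_idempotent 4 R F} \<and>
      (\<forall>i\<le>4. \<forall>j\<le>4. adj (R i) ** E j = mat (p i j) ** E j) \<and>
      (\<forall>j\<le>4. p 0 j = 1) \<and>
      0 < y \<and> 0 < z \<and> 0 < b \<and> 0 < c \<and>
      (let \<rho> = (of_real r1 + csqrt (of_real (-y))) / 2;
           \<tau> = (of_real t1 + csqrt (of_real (-z))) / 2;
           \<sigma> = (of_real r2 + csqrt (of_real (-b))) / 2;
           \<omega> = (of_real t2 - csqrt (of_real (-c))) / 2 in
        p 1 0 = of_real k1 / 2 \<and> p 2 0 = of_real k1 / 2 \<and>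
        p 3 0 = of_real k2 / 2 \<and> p 4 0 = of_real k2 / 2 \<and>
        p 1 1 = \<rho> \<and> p 2 1 = cnj \<rho> \<and> p 3 1 = \<tau> \<and> p 4 1 = cnj \<tau> \<and>
        p 1 2 = \<sigma> \<and> p 2 2 = cnj \<sigma> \<and> p 3 2 = \<omega> \<and> p 4 2 = cnj \<omega> \<and>
        p 1 3 = cnj \<sigma> \<and> p 2 3 = \<sigma> \<and> p 3 3 = cnj \<omega> \<and> p 4 3 = \<omega> \<and>
        p 1 4 = cnj \<rho> \<and> p 2 4 = \<rho> \<and> p 3 4 = cnj \<tau> \<and> p 4 4 = \<tau>))"

end

theory Submission
  imports Defs
begin


lemma mat_mul_entry: "(mat a ** (M::complex^'n^'m)) $ i $ j = a * M $ i $ j"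
  by (simp add: matrix_matrix_mult_def mat_def if_distrib if_distribR sum.delta' cong: if_cong)

lemma mat_mul_comm: "mat a ** (M::complex^'n^'n) = M ** mat a"
  by (simp add: vec_eq_iff matrix_matrix_mult_def mat_def if_distrib if_distribR sum.delta' mult.commute cong: if_cong)

lemma mat_mat: "mat a ** (mat b ** (M::complex^'n^'m)) = mat (a*b) ** M"
  by (simp add: vec_eq_iff mat_mul_entry)

lemma mat_assoc_l: "(mat a ** (M::complex^'n^'m)) ** N = mat a ** (M ** N)"
  by (simp add: matrix_mul_assoc)

lemma mat_cancel:
  assumes "(M::complex^'n^'m) \<noteq> 0" "mat a ** M = mat b ** M" shows "a = b"
proof -
  obtain i j where "M $ i $ j \<noteq> 0" using assms(1) by (metis vec_eq_iff zero_index)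
  moreover have "a * M $ i $ j = b * M $ i $ j" using assms(2) by (metis mat_mul_entry)
  ultimately show ?thesis by simp
qed

lemma sum_matmul: "(\<Sum>i\<in>S. f i) ** (N::complex^'n^'m) = (\<Sum>i\<in>S. f i ** N)"
    apply (simp add: vec_eq_iff matrix_matrix_mult_def sum_distrib_right sum_component)
  apply (intro allI)
  apply (rule sum.swap)
  done

lemma sum_mat_mul: "(\<Sum>i\<in>S. mat (f i) ** (N::complex^'n^'m)) = mat (\<Sum>i\<in>S. f i) ** N"
  by (simp add: vec_eq_iff mat_mul_entry sum_distrib_right)

lemma mat_vec: "(mat a ** (M::complex^'n^'m)) *v v = a *s (M *v v)"
  by (simp add: vec_eq_iff matrix_vector_mult_def mat_mul_entry sum_distrib_left mult.assoc)

lemma transfer5: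
  fixes f :: "nat \<Rightarrow> nat \<Rightarrow> complex"
  assumes ded: "\<And>a. (\<forall>i<5. (\<Sum>j<5. a j * f i j) = 0) \<Longrightarrow> (\<forall>j<5. a j = 0)"
    and c: "\<forall>j<5. (\<Sum>i<5. c i * f i j) = 0"
  shows "\<forall>i<5. c i = 0"
proof -
  obtain h :: "5 \<Rightarrow> nat" where h: "bij_betw h UNIV {0..<5}"
    using ex_bij_betw_finite_nat[of "UNIV :: 5 set"] by auto
  have hr: "h s < 5" for s using h by (auto simp: bij_betw_def)
  define g where "g = inv_into UNIV h"
  have gh: "g (h s) = s" for s using h by (simp add: g_def bij_betw_def)
  have hg: "j < 5 \<Longrightarrow> h (g j) = j" for j using h unfolding g_def
    by (metis atLeastLessThan_iff bij_betw_inv_into_right zero_le)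
  have reidx: "(\<Sum>j<5. F j) = (\<Sum>s\<in>UNIV. F (h s))" for F :: "nat \<Rightarrow> complex"
  proof -
    have "(\<Sum>s\<in>UNIV. F (h s)) = (\<Sum>j\<in>{0..<5}. F j)"
      using sum.reindex_bij_betw[OF h, of F] by simp
    then show ?thesis by (simp add: lessThan_atLeast0)
  qed
  define P :: "complex^5^5" where "P = (\<chi> r s. f (h s) (h r))"
  have inj: "\<forall>x. transpose P *v x = 0 \<longrightarrow> x = 0"
  proof (intro allI impI)
    fix x :: "complex^5" assume x: "transpose P *v x = 0"
    define a where "a j = x $ g j" for j
    have "\<forall>i<5. (\<Sum>j<5. a j * f i j) = 0"
    proof (intro allI impI)
      fix i :: nat assume "i < 5"
      have "(\<Sum>j<5. a j * f i j) = (\<Sum>r\<in>UNIV. x $ r * f i (h r))"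
        by (simp add: reidx a_def gh)
      also have "\<dots> = (transpose P *v x) $ g i"
        by (simp add: matrix_vector_mult_def transpose_def P_def hg \<open>i<5\<close> mult.commute)
      finally show "(\<Sum>j<5. a j * f i j) = 0" using x by simp
    qed
    then have "\<forall>j<5. a j = 0" by (rule ded)
    then show "x = 0" using hr by (auto simp: vec_eq_iff a_def gh) (metis gh hr)
  qed
  then obtain B where B: "B ** transpose P = mat 1" using matrix_left_invertible_ker(1) by blast
  then have "transpose P ** B = mat 1" using matrix_left_right_inverse by blast
  then have "transpose B ** P = mat 1" by (metis matrix_transpose_mul transpose_mat transpose_transpose)
  define cv :: "complex^5" where "cv = (\<chi> s. c (h s))"
  have "P *v cv = 0"
  proof -
    have "(P *v cv) $ r = (\<Sum>i<5. c i * f i (h r))" for r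
      by (simp add: matrix_vector_mult_def P_def cv_def reidx mult.commute)
    then show ?thesis using c hr by (simp add: vec_eq_iff)
  qed
  then have "cv = 0" by (metis \<open>transpose B ** P = mat 1\<close> matrix_vector_mul_assoc matrix_vector_mul_lid matrix_vector_mult_0_right)
  then show ?thesis using hg by (auto simp: vec_eq_iff cv_def) (metis hg)
qed


locale sch =
  fixes R :: "nat \<Rightarrow> ('x::finite \<times> 'x) set"
    and E :: "nat \<Rightarrow> complex^'x^'x"
    and p :: "nat \<Rightarrow> nat \<Rightarrow> complex"
  assumes AS: "assoc_scheme 4 R"
    and prim: "\<And>j. j \<le> 4 \<Longrightarrow> primitive_idempotent 4 R (E j)"
    and Einj: "inj_on E {0..4}"
    and AE: "\<And>i j. i \<le> 4 \<Longrightarrow> j \<le> 4 \<Longrightarrow> adj (R i) ** E j = mat (p i j) ** E j"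
    and p0: "\<And>j. j \<le> 4 \<Longrightarrow> p 0 j = 1"
    and pdist: "\<And>j k. j \<le> 4 \<Longrightarrow> k \<le> 4 \<Longrightarrow> j \<noteq> k \<Longrightarrow> \<exists>b\<le>4. p b j \<noteq> p b k"
begin

lemma R0: "R 0 = Id" using AS by (simp add: assoc_scheme_def)
lemma Rne: "i \<le> 4 \<Longrightarrow> R i \<noteq> {}" using AS by (simp add: assoc_scheme_def)
lemma Rdisj: "i \<le> 4 \<Longrightarrow> j \<le> 4 \<Longrightarrow> i \<noteq> j \<Longrightarrow> R i \<inter> R j = {}" using AS by (simp add: assoc_scheme_def)
lemma Runion: "\<exists>k\<le>4. (x, y) \<in> R k"
proof -
  have "(x,y) \<in> (\<Union>i\<le>4. R i)" using AS by (simp add: assoc_scheme_def)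
  then show ?thesis by auto
qed
lemma Rint: "i \<le> 4 \<Longrightarrow> j \<le> 4 \<Longrightarrow> k \<le> 4 \<Longrightarrow> \<exists>pp::nat. \<forall>x y. (x, y) \<in> R k \<longrightarrow>
         card {z. (x, z) \<in> R i \<and> (z, y) \<in> R j} = pp"
  using AS unfolding assoc_scheme_def by blast

lemma Enz: "j \<le> 4 \<Longrightarrow> E j \<noteq> 0" using prim by (simp add: primitive_idempotent_def)
lemma Eid: "j \<le> 4 \<Longrightarrow> E j ** E j = E j" using prim by (simp add: primitive_idempotent_def)

definition cls :: "'x \<Rightarrow> 'x \<Rightarrow> nat" where "cls x y = (THE k. k \<le> 4 \<and> (x, y) \<in> R k)"

lemma cls_uniq: "k \<le> 4 \<Longrightarrow> (x, y) \<in> R k \<Longrightarrow> cls x y = k"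
  unfolding cls_def
  by (rule the_equality) (use Rdisj in blast)+

lemma cls: "cls x y \<le> 4 \<and> (x, y) \<in> R (cls x y)"
  using Runion[of x y] cls_uniq by metis

lemma cls_iff: "k \<le> 4 \<Longrightarrow> (x, y) \<in> R k \<longleftrightarrow> cls x y = k"
  using cls cls_uniq by metis

definition lc :: "(nat \<Rightarrow> complex) \<Rightarrow> complex^'x^'x" where "lc c = (\<chi> x y. c (cls x y))"

lemma lc_entry: "lc c $ x $ y = c (cls x y)" by (simp add: lc_def)

lemma adj_lc: "i \<le> 4 \<Longrightarrow> adj (R i) = lc (\<lambda>k. if k = i then 1 else 0)"
  by (auto simp: vec_eq_iff adj_def lc_entry cls_iff)

lemma one_lc: "mat 1 = lc (\<lambda>k. if k = 0 then 1 else 0)"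
proof -
  have "(x, y) \<in> R 0 \<longleftrightarrow> x = y" for x y using R0 by auto
  then show ?thesis using cls_iff[of 0] by (auto simp: vec_eq_iff mat_def lc_entry)
qed

lemma lc_eq: "lc c = (\<Sum>i\<le>4. mat (c i) ** adj (R i))"
proof -
  have "(\<Sum>i\<le>4. c i * (if cls x y = i then 1 else 0)) = c (cls x y)" for x y
    using cls[of x y] by (simp add: if_distrib cong: if_cong)
  then show ?thesis
    by (simp add: vec_eq_iff mat_mul_entry adj_def cls_iff lc_entry)
qed

lemma bm_iff: "M \<in> bose_mesner 4 R \<longleftrightarrow> (\<exists>c. M = lc c)"
  by (simp add: bose_mesner_def lc_eq)

lemma lc_sum: "lc (\<lambda>k. \<Sum>j\<in>S. f j k) = (\<Sum>j\<in>S. lc (f j))"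
  by (simp add: vec_eq_iff lc_entry)

lemma lc_diff: "lc (\<lambda>k. c k - d k) = lc c - lc d"
  by (simp add: vec_eq_iff lc_entry)

lemma lc_scal: "lc (\<lambda>k. a * c k) = mat a ** lc c"
  by (simp add: vec_eq_iff lc_entry mat_mul_entry)

definition pn :: "nat \<Rightarrow> nat \<Rightarrow> nat \<Rightarrow> nat" where
  "pn i j k = (SOME pp. \<forall>x y. (x, y) \<in> R k \<longrightarrow> card {z. (x, z) \<in> R i \<and> (z, y) \<in> R j} = pp)"

lemma pn: "i \<le> 4 \<Longrightarrow> j \<le> 4 \<Longrightarrow> card {z. (x, z) \<in> R i \<and> (z, y) \<in> R j} = pn i j (cls x y)"
proof -
  assume ij: "i \<le> 4" "j \<le> 4"
  have "\<exists>pp::nat. \<forall>x y. (x, y) \<in> R (cls x0 y0) \<longrightarrow> card {z. (x, z) \<in> R i \<and> (z, y) \<in> R j} = pp" for x0 y0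
    using Rint ij cls by blast
  from someI_ex[OF this[of x y]] show ?thesis unfolding pn_def using cls by blast
qed

definition prodc :: "(nat \<Rightarrow> complex) \<Rightarrow> (nat \<Rightarrow> complex) \<Rightarrow> nat \<Rightarrow> complex" where
  "prodc c d k = (\<Sum>i\<le>4. \<Sum>j\<le>4. c i * d j * of_nat (pn i j k))"

lemma lc_mult: "lc c ** lc d = lc (prodc c d)"
proof -
  have "(\<Sum>z\<in>UNIV. c (cls x z) * d (cls z y)) = prodc c d (cls x y)" for x y
  proof -
    have "(\<Sum>z\<in>UNIV. c (cls x z) * d (cls z y)) =
        (\<Sum>z\<in>UNIV. \<Sum>i\<le>4. \<Sum>j\<le>4. if cls x z = i \<and> cls z y = j then c i * d j else 0)"
    proof (rule sum.cong[OF refl])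
      fix z
      have "(\<Sum>i\<le>4. \<Sum>j\<le>4. if cls x z = i \<and> cls z y = j then c i * d j else 0)
          = (\<Sum>i\<le>4. if cls x z = i then (\<Sum>j\<le>4. if cls z y = j then c i * d j else 0) else 0)"
        by (rule sum.cong[OF refl]) auto
      also have "\<dots> = c (cls x z) * d (cls z y)" using cls[of x z] cls[of z y]
        by (simp add: sum.delta)
      finally show "c (cls x z) * d (cls z y) = (\<Sum>i\<le>4. \<Sum>j\<le>4. if cls x z = i \<and> cls z y = j then c i * d j else 0)" by simp
    qed
    also have "\<dots> = (\<Sum>i\<le>4. \<Sum>j\<le>4. \<Sum>z\<in>UNIV. if cls x z = i \<and> cls z y = j then c i * d j else 0)"
      by (simp add: sum.swap[of _ UNIV])
    also have "\<dots> = (\<Sum>i\<le>4. \<Sum>j\<le>4. c i * d j * of_nat (pn i j (cls x y)))"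
    proof (intro sum.cong refl)
      fix i j :: nat assume ij: "i \<in> {..4}" "j \<in> {..4}"
      have "(\<Sum>z\<in>UNIV. if cls x z = i \<and> cls z y = j then c i * d j else 0)
          = of_nat (card {z. cls x z = i \<and> cls z y = j}) * (c i * d j)"
        by (simp add: sum.If_cases)
      also have "{z. cls x z = i \<and> cls z y = j} = {z. (x, z) \<in> R i \<and> (z, y) \<in> R j}"
        using ij cls_iff by auto
      finally show "(\<Sum>z\<in>UNIV. if cls x z = i \<and> cls z y = j then c i * d j else 0) = c i * d j * of_nat (pn i j (cls x y))"
        using pn ij by simp
    qed
    finally show ?thesis by (simp add: prodc_def)
  qed
  then show ?thesis by (simp add: vec_eq_iff matrix_matrix_mult_def lc_entry)
qed

end


context sch begin

definition chr :: "(nat \<Rightarrow> complex) \<Rightarrow> nat \<Rightarrow> complex" where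
  "chr c l = (\<Sum>i\<le>4. c i * p i l)"

lemma lc_E: "l \<le> 4 \<Longrightarrow> lc c ** E l = mat (chr c l) ** E l"
proof -
  assume l: "l \<le> 4"
  have "lc c ** E l = (\<Sum>i\<le>4. mat (c i) ** (adj (R i) ** E l))"
    by (simp add: lc_eq sum_matmul matrix_mul_assoc)
  also have "\<dots> = (\<Sum>i\<le>4. mat (c i * p i l) ** E l)"
    using l by (intro sum.cong refl) (simp add: AE mat_mat)
  also have "\<dots> = mat (chr c l) ** E l" by (simp add: sum_mat_mul chr_def)
  finally show ?thesis .
qed

lemma chr_eq: "lc c = lc d \<Longrightarrow> l \<le> 4 \<Longrightarrow> chr c l = chr d l"
  using lc_E mat_cancel Enz by metis

lemma chr_mult: "l \<le> 4 \<Longrightarrow> chr (prodc c d) l = chr c l * chr d l"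
proof -
  assume l: "l \<le> 4"
  have "mat (chr (prodc c d) l) ** E l = lc c ** (lc d ** E l)"
    using l by (simp add: lc_E[symmetric] lc_mult matrix_mul_assoc)
  also have "\<dots> = mat (chr c l * chr d l) ** E l"
    using l by (simp add: lc_E mat_mul_comm matrix_mul_assoc mat_mat)
       (metis lc_E mat_mat mat_mul_comm matrix_mul_assoc mult.commute)
  finally show ?thesis using mat_cancel Enz l by blast
qed

lemma chr_delta: "i \<le> 4 \<Longrightarrow> chr (\<lambda>k. if k = i then 1 else 0) l = p i l"
proof -
  assume "i \<le> 4"
  have "(\<Sum>k\<le>4. (if k = i then 1 else 0) * p k l) = (\<Sum>k\<le>4. if k = i then p i l else 0)"
    by (intro sum.cong refl) auto
  then show ?thesis using \<open>i \<le> 4\<close> by (simp add: chr_def)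
qed

lemma ded_closed:
  assumes a: "\<forall>i\<le>4. (\<Sum>j\<le>4. a j * p i j) = 0" and b: "b \<le> 4"
  shows "\<forall>i\<le>4. (\<Sum>j\<le>4. a j * p b j * p i j) = 0"
proof (intro allI impI)
  fix i :: nat assume i: "i \<le> 4"
  define d where "d = prodc (\<lambda>k. if k = b then 1 else 0) (\<lambda>k. if k = i then 1 else 0)"
  have "p b j * p i j = chr d j" if "j \<le> 4" for j
    using chr_mult[OF that] chr_delta b i by (simp add: d_def)
  then have "(\<Sum>j\<le>4. a j * p b j * p i j) = (\<Sum>j\<le>4. a j * (\<Sum>k\<le>4. d k * p k j))"
    by (simp add: chr_def mult.assoc)
  also have "\<dots> = (\<Sum>k\<le>4. d k * (\<Sum>j\<le>4. a j * p k j))"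
    by (simp add: sum_distrib_left sum_distrib_right mult_ac) (rule sum.swap)
  also have "\<dots> = 0" using a by simp
  finally show "(\<Sum>j\<le>4. a j * p b j * p i j) = 0" .
qed

lemma dedekind_aux:
  "\<forall>a. card {j. j \<le> 4 \<and> a j \<noteq> 0} = n \<longrightarrow> (\<forall>i\<le>4. (\<Sum>j\<le>4. a j * p i j) = 0) \<longrightarrow> (\<forall>j\<le>4. a j = 0)"
proof (induction n rule: less_induct)
  case (less n)
  show ?case
  proof (rule allI, intro impI)
    fix a :: "nat \<Rightarrow> complex"
    assume n: "card {j. j \<le> 4 \<and> a j \<noteq> 0} = n" and a: "\<forall>i\<le>4. (\<Sum>j\<le>4. a j * p i j) = 0"
    show "\<forall>j\<le>4. a j = 0"
    proof (rule ccontr)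
      assume "\<not> (\<forall>j\<le>4. a j = 0)"
      then obtain j where j: "j \<le> 4" "a j \<noteq> 0" by blast
      show False
      proof (cases "\<exists>k\<le>4. k \<noteq> j \<and> a k \<noteq> 0")
        case False
        have "(\<Sum>l\<le>4. a l * p 0 l) = a j"
        proof -
          have "(\<Sum>l\<le>4. a l * p 0 l) = (\<Sum>l\<le>4. if l = j then a j else 0)"
            using False p0 by (intro sum.cong refl) auto
          then show ?thesis using j by simp
        qed
        then show False using a j by simp
      next
        case True
        then obtain k where k: "k \<le> 4" "k \<noteq> j" "a k \<noteq> 0" by blast
        obtain b where b: "b \<le> 4" "p b j \<noteq> p b k" using pdist[OF j(1) k(1)] k by metis
        define a' where "a' l = a l * (p b l - p b k)" for l
        have a': "\<forall>i\<le>4. (\<Sum>l\<le>4. a' l * p i l) = 0"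
        proof (intro allI impI)
          fix i :: nat assume i: "i \<le> 4"
          have "(\<Sum>l\<le>4. a' l * p i l) = (\<Sum>l\<le>4. a l * p b l * p i l) - p b k * (\<Sum>l\<le>4. a l * p i l)"
            by (simp add: a'_def algebra_simps sum_subtractf sum_distrib_left)
          then show "(\<Sum>l\<le>4. a' l * p i l) = 0" using ded_closed[OF a b(1)] a i by simp
        qed
        have sub: "{l. l \<le> 4 \<and> a' l \<noteq> 0} \<subseteq> {l. l \<le> 4 \<and> a l \<noteq> 0} - {k}"
          by (auto simp: a'_def)
        have "card {l. l \<le> 4 \<and> a' l \<noteq> 0} < n"
        proof -
          have "card {l. l \<le> 4 \<and> a' l \<noteq> 0} \<le> card ({l. l \<le> 4 \<and> a l \<noteq> 0} - {k})"
            by (rule card_mono[OF _ sub]) auto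
          also have "\<dots> < n" using n k card_Diff1_less[of "{l. l \<le> 4 \<and> a l \<noteq> 0}" k] by auto
          finally show ?thesis .
        qed
        with less a' have "\<forall>l\<le>4. a' l = 0" by blast
        then show False using j b by (auto simp: a'_def)
      qed
    qed
  qed
qed

lemma dedekind: "(\<forall>i\<le>4. (\<Sum>j\<le>4. a j * p i j) = 0) \<Longrightarrow> j \<le> 4 \<Longrightarrow> a j = 0"
  using dedekind_aux by blast

lemma chr_inj0: assumes "\<forall>l\<le>4. chr c l = 0" shows "lc c = 0"
proof -
  have le: "(\<Sum>j<5. F j) = (\<Sum>j\<le>4. F j)" for F :: "nat \<Rightarrow> complex"
    by (rule sum.cong) auto
  have "\<forall>i<5. c i = 0"
  proof (rule transfer5[where f = p])
    fix a :: "nat \<Rightarrow> complex"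
    assume "\<forall>i<5. (\<Sum>j<5. a j * p i j) = 0"
    then show "\<forall>j<5. a j = 0" using dedekind[of a] by (simp add: le)
  next
    show "\<forall>j<5. (\<Sum>i<5. c i * p i j) = 0" using assms by (simp add: le chr_def)
  qed
  then show ?thesis using cls by (simp add: vec_eq_iff lc_entry) (metis less_Suc_eq_le numeral_eq_Suc pred_numeral_simps(3))
qed

lemma chr_inj: assumes "\<forall>l\<le>4. chr c l = chr d l" shows "lc c = lc d"
proof -
  have "\<forall>l\<le>4. chr (\<lambda>k. c k - d k) l = 0" using assms
    by (simp add: chr_def algebra_simps sum_subtractf)
  then show ?thesis using chr_inj0 lc_diff by fastforce
qed

end


context sch begin

definition ce :: "nat \<Rightarrow> nat \<Rightarrow> complex" where "ce j = (SOME c. E j = lc c)"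

lemma E_lc: "j \<le> 4 \<Longrightarrow> E j = lc (ce j)"
proof -
  assume "j \<le> 4"
  then have "\<exists>c. E j = lc c" using prim bm_iff by (simp add: primitive_idempotent_def)
  then show ?thesis unfolding ce_def by (rule someI_ex)
qed

definition mu where "mu j l = chr (ce j) l"

lemma lc_bm: "lc c \<in> bose_mesner 4 R" using bm_iff by blast

lemma mu_idem: "j \<le> 4 \<Longrightarrow> l \<le> 4 \<Longrightarrow> mu j l * mu j l = mu j l"
proof -
  assume jl: "j \<le> 4" "l \<le> 4"
  have "lc (prodc (ce j) (ce j)) = lc (ce j)" using Eid E_lc lc_mult jl by metis
  then show ?thesis using chr_eq chr_mult jl unfolding mu_def by metis
qed

lemma mu01: "j \<le> 4 \<Longrightarrow> l \<le> 4 \<Longrightarrow> mu j l = 0 \<or> mu j l = 1"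
  using mu_idem by (metis mult_cancel_right1 mult_eq_0_iff)

lemma mu_diag: "j \<le> 4 \<Longrightarrow> mu j j = 1"
proof -
  assume j: "j \<le> 4"
  have "mat (mu j j) ** E j = mat 1 ** E j"
    using lc_E[OF j, of "ce j"] E_lc[OF j] Eid[OF j] by (simp add: mu_def)
  then show ?thesis using mat_cancel Enz j by blast
qed

lemma mu_off: assumes jk: "j \<le> 4" "k \<le> 4" "j \<noteq> k" shows "mu j k = 0"
proof (rule ccontr)
  assume "mu j k \<noteq> 0"
  then have m1: "mu j k = 1" using mu01 jk by blast
  define f where "f = prodc (ce k) (ce j)"
  define F where "F = lc f"
  have F: "F = E k ** E j" using E_lc jk by (simp add: F_def f_def lc_mult)
  have chrF: "l \<le> 4 \<Longrightarrow> chr f l = mu k l * mu j l" for l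
    using chr_mult by (simp add: f_def mu_def)
  have idem1: "l \<le> 4 \<Longrightarrow> mu k l * mu j l * (mu k l * mu j l) = mu k l * mu j l" for l
    using mu01[of k l] mu01[of j l] jk by auto
  have idem2: "l \<le> 4 \<Longrightarrow> mu k l * mu j l * mu j l = mu k l * mu j l" for l
    using mu01[of k l] mu01[of j l] jk by auto
  have idem3: "l \<le> 4 \<Longrightarrow> mu k l * mu j l * mu k l = mu k l * mu j l" for l
    using mu01[of k l] mu01[of j l] jk by auto
  have FF: "F ** F = F"
    unfolding F_def lc_mult
    by (rule chr_inj) (auto simp: chr_mult chrF idem1)
  have FEj: "F ** E j = F"
    unfolding F_def E_lc[OF jk(1)] lc_mult
    by (rule chr_inj) (auto simp: chr_mult chrF mu_def[symmetric] idem2)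
  have FEk: "F ** E k = F"
    unfolding F_def E_lc[OF jk(2)] lc_mult
    by (rule chr_inj) (auto simp: chr_mult chrF mu_def[symmetric] idem3)
  have Fnz: "F \<noteq> 0"
  proof
    assume "F = 0"
    then have "lc f = lc (\<lambda>_. 0)" by (simp add: F_def vec_eq_iff lc_entry)
    then have "chr f k = chr (\<lambda>_. 0) k" using chr_eq jk by blast
    then show False using chrF[OF jk(2)] mu_diag[OF jk(2)] m1 by (simp add: chr_def)
  qed
  have "F = E j" using prim[OF jk(1)] FF FEj Fnz lc_bm unfolding primitive_idempotent_def F_def by blast
  moreover have "F = E k" using prim[OF jk(2)] FF FEk Fnz lc_bm unfolding primitive_idempotent_def F_def by blast
  ultimately show False using Einj jk by (metis atLeastAtMost_iff inj_onD zero_le)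
qed

lemma mu_delta: "j \<le> 4 \<Longrightarrow> l \<le> 4 \<Longrightarrow> mu j l = (if j = l then 1 else 0)"
  using mu_diag mu_off by auto

lemma chr_sum: "chr (\<lambda>k. \<Sum>j\<in>S. f j k) l = (\<Sum>j\<in>S. chr (f j) l)"
  by (simp add: chr_def sum_distrib_right) (rule sum.swap)

lemma sumE: "(\<Sum>j\<le>4. E j) = mat 1"
proof -
  have "(\<Sum>j\<le>4. E j) = lc (\<lambda>k. \<Sum>j\<le>4. ce j k)" by (simp add: lc_sum E_lc)
  also have "\<dots> = lc (\<lambda>k. if k = 0 then 1 else 0)"
  proof (rule chr_inj, intro allI impI)
    fix l :: nat assume l: "l \<le> 4"
    have "chr (\<lambda>k. \<Sum>j\<le>4. ce j k) l = (\<Sum>j\<le>4. mu j l)" by (simp add: chr_sum mu_def)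
    also have "\<dots> = (\<Sum>j\<le>4. if j = l then 1 else 0)" using l by (intro sum.cong refl) (simp add: mu_delta)
    also have "\<dots> = 1" using l by simp
    finally show "chr (\<lambda>k. \<Sum>j\<le>4. ce j k) l = chr (\<lambda>k. if k = 0 then 1 else 0) l"
      using chr_delta[of 0 l] p0 l by simp
  qed
  finally show ?thesis using one_lc by simp
qed

lemma EA: "i \<le> 4 \<Longrightarrow> j \<le> 4 \<Longrightarrow> E j ** adj (R i) = mat (p i j) ** E j"
proof -
  assume ij: "i \<le> 4" "j \<le> 4"
  have "E j ** adj (R i) = lc (prodc (ce j) (\<lambda>k. if k = i then 1 else 0))"
    using ij by (simp add: E_lc adj_lc lc_mult)
  also have "\<dots> = lc (\<lambda>k. p i j * ce j k)"
  proof (rule chr_inj, intro allI impI)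
    fix l :: nat assume l: "l \<le> 4"
    have 1: "chr (prodc (ce j) (\<lambda>k. if k = i then 1 else 0)) l = mu j l * p i l"
      using l ij by (simp add: chr_mult chr_delta mu_def)
    have 2: "chr (\<lambda>k. p i j * ce j k) l = p i j * mu j l"
      by (simp add: chr_def mu_def sum_distrib_left mult_ac)
    show "chr (prodc (ce j) (\<lambda>k. if k = i then 1 else 0)) l = chr (\<lambda>k. p i j * ce j k) l"
      unfolding 1 2 using mu_delta l ij by (cases "j = l") auto
  qed
  finally show ?thesis using ij by (simp add: lc_scal E_lc)
qed

lemma eig_iff: assumes i: "i \<le> 4" shows "eigenvalue (adj (R i)) e \<longleftrightarrow> (\<exists>j\<le>4. e = p i j)"
proof
  assume "eigenvalue (adj (R i)) e"
  then obtain v where v: "v \<noteq> 0" "adj (R i) *v v = e *s v" by (auto simp: eigenvalue_def)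
  have "v = (\<Sum>j\<le>4. E j) *v v" by (simp add: sumE)
  also have "\<dots> = (\<Sum>j\<le>4. E j *v v)"
    apply (simp add: vec_eq_iff matrix_vector_mult_def sum_distrib_right)
    apply (intro allI)
    apply (rule sum.swap)
    done
  finally have "\<exists>j\<le>4. E j *v v \<noteq> 0" using v(1) by (metis (no_types, lifting) atMost_iff sum.neutral)
  then obtain j where j: "j \<le> 4" "E j *v v \<noteq> 0" by blast
  have "e *s (E j *v v) = E j *v (adj (R i) *v v)"
    using v(2) by (simp add: vec_eq_iff matrix_vector_mult_def sum_distrib_left mult_ac)
  also have "\<dots> = p i j *s (E j *v v)"
    by (simp add: matrix_vector_mul_assoc EA[OF i j(1)] mat_vec)
  finally have "(e - p i j) *s (E j *v v) = 0" by (simp add: vector_sub_rdistrib)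
  then show "\<exists>j\<le>4. e = p i j" using j by (metis right_minus_eq vector_mul_eq_0)
next
  assume "\<exists>j\<le>4. e = p i j"
  then obtain j where j: "j \<le> 4" "e = p i j" by blast
  obtain w where w: "E j *v w \<noteq> 0" using Enz[OF j(1)] matrix_eq[of "E j" 0]
    by (metis matrix_vector_mult_0 times0_left)
  have "adj (R i) *v (E j *v w) = e *s (E j *v w)"
    using j by (simp add: matrix_vector_mul_assoc AE[OF i] mat_vec)
  then show "eigenvalue (adj (R i)) e" using w by (auto simp: eigenvalue_def)
qed

lemma rowsum0:
  assumes R12: "(R 1)\<inverse> = R 2" and l: "l \<le> 4" and im: "Im (p 1 l) \<noteq> 0"
  shows "(\<Sum>i\<le>4. p i l) = 0"
proof -
  define \<kappa> :: complex where "\<kappa> = of_nat (pn 1 2 0)"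
  have "adj (R 1) ** lc (\<lambda>_. 1) = mat \<kappa> ** lc (\<lambda>_. 1)"
  proof -
    have "(\<Sum>z\<in>UNIV. (if (x, z) \<in> R 1 then 1 else 0) :: complex) = \<kappa>" for x
    proof -
      have "(\<Sum>z\<in>UNIV. (if (x, z) \<in> R 1 then 1 else 0) :: complex) = of_nat (card {z. (x, z) \<in> R 1})"
        by (simp add: sum.If_cases)
      also have "{z. (x, z) \<in> R 1} = {z. (x, z) \<in> R 1 \<and> (z, x) \<in> R 2}" using R12 by auto
      also have "card \<dots> = pn 1 2 (cls x x)" by (rule pn) auto
      also have "cls x x = 0" using R0 by (intro cls_uniq) auto
      finally show ?thesis by (simp add: \<kappa>_def)
    qed
    then have "(adj (R 1) ** lc (\<lambda>_. 1)) $ x $ y = \<kappa>" for x y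
      by (simp add: matrix_matrix_mult_def adj_def lc_entry)
    then show ?thesis by (simp add: vec_eq_iff mat_mul_entry lc_entry)
  qed
  then have "lc (prodc (\<lambda>k. if k = 1 then 1 else 0) (\<lambda>_. 1)) = lc (\<lambda>k. \<kappa> * 1)"
    by (simp add: adj_lc lc_mult lc_scal del: mult_1_right)
  then have "chr (prodc (\<lambda>k. if k = 1 then 1 else 0) (\<lambda>_. 1)) l = chr (\<lambda>k. \<kappa> * 1) l"
    using chr_eq l by blast
  then have "p 1 l * chr (\<lambda>_. 1) l = \<kappa> * chr (\<lambda>_. 1) l"
    using l by (simp add: chr_mult chr_delta) (simp add: chr_def sum_distrib_left)
  moreover have "p 1 l \<noteq> \<kappa>" using im by (auto simp: \<kappa>_def)
  ultimately have "chr (\<lambda>_. 1) l = 0" by simp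
  then show ?thesis by (simp add: chr_def)
qed

end


lemma inj5: "distinct [f 0, f 1, f 2, f 3, f (4::nat)] \<Longrightarrow> card (f ` {..4}) = 5"
proof -
  assume d: "distinct [f 0, f 1, f 2, f 3, f (4::nat)]"
  have "{..4::nat} = {0,1,2,3,4}" by auto
  then show ?thesis using d by simp
qed

lemma le4: "(j::nat) \<le> 4 \<longleftrightarrow> j = 0 \<or> j = 1 \<or> j = 2 \<or> j = 3 \<or> j = 4" by auto

theorem proposition4p3:
  fixes R :: "nat \<Rightarrow> ('x::finite \<times> 'x) set"
  assumes "skew_symmetric_scheme 4 R"
    and "(R 1)\<inverse> = R 2" and "(R 3)\<inverse> = R 4"
    and "char_table_type3 R"
  shows "\<forall>i. 1 \<le> i \<and> i \<le> 4 \<longrightarrow> card {e. eigenvalue (adj (R i)) e} = 5"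
proof -
  have AS: "assoc_scheme 4 R" using assms(1) by (simp add: skew_symmetric_scheme_def)
  obtain E :: "nat \<Rightarrow> complex^'x^'x" and p :: "nat \<Rightarrow> nat \<Rightarrow> complex" and k1 k2 r1 t1 r2 t2 y z b c :: real
    where bij: "bij_betw E {0..4} {F. primitive_idempotent 4 R F}"
    and AE: "\<forall>i\<le>4. \<forall>j\<le>4. adj (R i) ** E j = mat (p i j) ** E j"
    and p0: "\<forall>j\<le>4. p 0 j = 1"
    and pos: "0 < y" "0 < z" "0 < b" "0 < c"
    and tab: "let \<rho> = (of_real r1 + csqrt (of_real (-y))) / 2;
           \<tau> = (of_real t1 + csqrt (of_real (-z))) / 2;
           \<sigma> = (of_real r2 + csqrt (of_real (-b))) / 2;
           \<omega> = (of_real t2 - csqrt (of_real (-c))) / 2 in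
        p 1 0 = of_real k1 / 2 \<and> p 2 0 = of_real k1 / 2 \<and>
        p 3 0 = of_real k2 / 2 \<and> p 4 0 = of_real k2 / 2 \<and>
        p 1 1 = \<rho> \<and> p 2 1 = cnj \<rho> \<and> p 3 1 = \<tau> \<and> p 4 1 = cnj \<tau> \<and>
        p 1 2 = \<sigma> \<and> p 2 2 = cnj \<sigma> \<and> p 3 2 = \<omega> \<and> p 4 2 = cnj \<omega> \<and>
        p 1 3 = cnj \<sigma> \<and> p 2 3 = \<sigma> \<and> p 3 3 = cnj \<omega> \<and> p 4 3 = \<omega> \<and>
        p 1 4 = cnj \<rho> \<and> p 2 4 = \<rho> \<and> p 3 4 = cnj \<tau> \<and> p 4 4 = \<tau>"
    using assms(4) unfolding char_table_type3_def by blast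
  have sq: "0 < w \<Longrightarrow> csqrt (complex_of_real (- w)) = \<i> * complex_of_real (sqrt w)" for w :: real
    by (simp add: csqrt_of_real_nonpos)
  define Y where "Y = sqrt y / 2"
  define Z where "Z = sqrt z / 2"
  define B where "B = sqrt b / 2"
  define C where "C = sqrt c / 2"
  have YZBC: "Y > 0" "Z > 0" "B > 0" "C > 0" using pos by (simp_all add: Y_def Z_def B_def C_def)
  have rho: "(of_real r1 + csqrt (of_real (-y))) / 2 = Complex (r1/2) Y"
    using pos by (simp add: sq complex_eq_iff Y_def)
  have tau: "(of_real t1 + csqrt (of_real (-z))) / 2 = Complex (t1/2) Z"
    using pos by (simp add: sq complex_eq_iff Z_def)
  have sig: "(of_real r2 + csqrt (of_real (-b))) / 2 = Complex (r2/2) B"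
    using pos by (simp add: sq complex_eq_iff B_def)
  have ome: "(of_real t2 - csqrt (of_real (-c))) / 2 = Complex (t2/2) (-C)"
    using pos by (simp add: sq complex_eq_iff C_def)
  have k: "complex_of_real k1 / 2 = Complex (k1/2) 0" "complex_of_real k2 / 2 = Complex (k2/2) 0"
    by (simp_all add: complex_eq_iff)
  have P: "p 1 0 = Complex (k1/2) 0" "p 2 0 = Complex (k1/2) 0"
    "p 3 0 = Complex (k2/2) 0" "p 4 0 = Complex (k2/2) 0"
    "p 1 1 = Complex (r1/2) Y" "p 2 1 = Complex (r1/2) (-Y)" "p 3 1 = Complex (t1/2) Z" "p 4 1 = Complex (t1/2) (-Z)"
    "p 1 2 = Complex (r2/2) B" "p 2 2 = Complex (r2/2) (-B)" "p 3 2 = Complex (t2/2) (-C)" "p 4 2 = Complex (t2/2) C"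
    "p 1 3 = Complex (r2/2) (-B)" "p 2 3 = Complex (r2/2) B" "p 3 3 = Complex (t2/2) C" "p 4 3 = Complex (t2/2) (-C)"
    "p 1 4 = Complex (r1/2) (-Y)" "p 2 4 = Complex (r1/2) Y" "p 3 4 = Complex (t1/2) (-Z)" "p 4 4 = Complex (t1/2) Z"
    using tab unfolding Let_def rho tau sig ome k by (simp_all add: complex_cnj)
  note P2 = P[unfolded One_nat_def]
  have p00: "p 0 j = 1" if "j \<le> 4" for j using p0 that by blast
  interpret S: sch R E p
  proof
    show "assoc_scheme 4 R" by (rule AS)
    show "primitive_idempotent 4 R (E j)" if "j \<le> 4" for j
      using bij that by (auto simp: bij_betw_def)
    show "inj_on E {0..4}" using bij by (simp add: bij_betw_def)
    show "adj (R i) ** E j = mat (p i j) ** E j" if "i \<le> 4" "j \<le> 4" for i j using AE that by blast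
    show "p 0 j = 1" if "j \<le> 4" for j using p0 that by blast
    show "\<exists>b\<le>4. p b j \<noteq> p b k" if "j \<le> 4" "k \<le> 4" "j \<noteq> k" for j k
    proof -
      have "p 1 j \<noteq> p 1 k \<or> p 3 j \<noteq> p 3 k"
        using that YZBC unfolding le4 by (elim disjE) (simp_all add: P P2)
      moreover have "(1::nat) \<le> 4" "(3::nat) \<le> 4" by simp_all
      ultimately show ?thesis by blast
    qed
  qed
  have s1: "(\<Sum>i\<le>4. p i 1) = 0" by (rule S.rowsum0[OF assms(2)]) (use YZBC in \<open>simp_all add: P P2\<close>)
  have s2: "(\<Sum>i\<le>4. p i 2) = 0" by (rule S.rowsum0[OF assms(2)]) (use YZBC in \<open>simp_all add: P P2\<close>)
  have A4: "{..4::nat} = {0,1,2,3,4}" by auto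
  have e1: "1 + r1 + t1 = 0" using s1 by (simp add: A4 P P2 p00 complex_eq_iff)
  have e2: "1 + r2 + t2 = 0" using s2 by (simp add: A4 P P2 p00 complex_eq_iff)
  have rr: "r1 \<noteq> r2"
  proof
    assume "r1 = r2"
    then have "t1 = t2" using e1 e2 by simp
    define a :: "nat \<Rightarrow> complex" where "a j = (if j = 1 \<or> j = 4 then 1 else if j = 2 \<or> j = 3 then -1 else 0)" for j
    have c0: "p 0 1 - p 0 2 - p 0 3 + p 0 4 = 0" by (simp add: p00)
    have c1: "p 1 1 - p 1 2 - p 1 3 + p 1 4 = 0" using P(5,9,13,17) \<open>r1 = r2\<close> by (simp add: complex_eq_iff)
    have c2: "p 2 1 - p 2 2 - p 2 3 + p 2 4 = 0" using P(6,10,14,18) \<open>r1 = r2\<close> by (simp add: complex_eq_iff)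
    have c3: "p 3 1 - p 3 2 - p 3 3 + p 3 4 = 0" using P(7,11,15,19) \<open>t1 = t2\<close> by (simp add: complex_eq_iff)
    have c4: "p 4 1 - p 4 2 - p 4 3 + p 4 4 = 0" using P(8,12,16,20) \<open>t1 = t2\<close> by (simp add: complex_eq_iff)
    have "\<forall>i\<le>4. (\<Sum>j\<le>4. a j * p i j) = 0"
    proof (intro allI impI)
      fix i :: nat assume "i \<le> 4"
      have ex: "(\<Sum>j\<le>4. a j * p i j) = p i 1 - p i 2 - p i 3 + p i 4"
        by (simp add: A4 a_def)
      show "(\<Sum>j\<le>4. a j * p i j) = 0" unfolding ex using \<open>i \<le> 4\<close> \<open>r1 = r2\<close> \<open>t1 = t2\<close>
        unfolding le4 using c0 c1 c2 c3 c4 by auto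
    qed
    then have "a 1 = 0" by (rule S.dedekind) simp
    then show False by (simp add: a_def)
  qed
  have tt: "t1 \<noteq> t2" using rr e1 e2 by auto
  show ?thesis
  proof (intro allI impI)
    fix i :: nat assume i: "1 \<le> i \<and> i \<le> 4"
    then have "{e. eigenvalue (adj (R i)) e} = p i ` {..4}" using S.eig_iff by auto
    have d1: "distinct [p 1 0, p 1 1, p 1 2, p 1 3, p 1 4]"
      unfolding P using YZBC rr by auto
    have d2: "distinct [p 2 0, p 2 1, p 2 2, p 2 3, p 2 4]"
      unfolding P using YZBC rr by auto
    have d3: "distinct [p 3 0, p 3 1, p 3 2, p 3 3, p 3 4]"
      unfolding P using YZBC tt by auto
    have d4: "distinct [p 4 0, p 4 1, p 4 2, p 4 3, p 4 4]"
      unfolding P using YZBC tt by auto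
    have "distinct [p i 0, p i 1, p i 2, p i 3, p i 4]"
      using i d1 d2 d3 d4 unfolding le4 by auto
    moreover note \<open>{e. eigenvalue (adj (R i)) e} = p i ` {..4}\<close>
    ultimately show "card {e. eigenvalue (adj (R i)) e} = 5" using inj5[of "p i"] by simp
  qed
qed


end
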